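(* Let $\mathcal{I}\in\mathrm{Ins}(\Omega,\mathcal{H},\mathcal{K})$ and $\mathcal{J}\in\mathrm{Ins}(\Lambda,\mathcal{H},\mathcal{V})$ be instruments. If $\mathcal{I}\preceq\mathcal{J}$, then $\mathcal{I}$ is compatible with $\mathsf{A}^{\mathcal{J}}$; in particular $\Phi^{\mathcal{I}}$ is compatible with $\mathsf{A}^{\mathcal{J}}$ and $\mathsf{A}^{\mathcal{I}}$ is compatible with $\mathsf{A}^{\mathcal{J}}$.
   Context: All Hilbert spaces are finite-dimensional and complex, and all outcome sets are finite. A POVM $\mathsf{A}\in\mathcal{O}(\Omega,\mathcal{H})$ is a map $x\mapsto \mathsf{A}(x)$ from $\Omega$ to positive operators on $\mathcal{H}$ with $\sum_x \mathsf{A}(x)=I$. An instrument $\mathcal{I}\in\mathrm{Ins}(\Omega,\mathcal{H},\mathcal{K})$ is a family $(\mathcal{I}_x)_{x\in\Omega}$ of completely positive trace-nonincreasing linear maps $\mathcal{L}(\mathcal{H})\to\mathcal{L}(\mathcal{K})$ such that $\Phi^{\mathcal{I}}:=\sum_x\mathcal{I}_x$ is trace preserving (induced channel); its induced POVM $\mathsf{A}^{\mathcal{I}}$ is defined by $\mathrm{tr}[\mathsf{A}^{\mathcal{I}}(x)\varrho]=\mathrm{tr}[\mathcal{I}_x(\varrho)]$. Postprocessing: $\mathcal{I}\preceq\mathcal{J}$ if there exist instruments $\mathcal{R}^{(y)}\in\mathrm{Ins}(\Omega,\mathcal{V},\mathcal{K})$, $y\in\Lambda$, with $\mathcal{I}_x=\sum_{y}\mathcal{R}^{(y)}_x\circ\mathcal{J}_y$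 for all $x$. Two instruments $\mathcal{I}\in\mathrm{Ins}(\Omega,\mathcal{H},\mathcal{K})$, $\mathcal{J}\in\mathrm{Ins}(\Lambda,\mathcal{H},\mathcal{V})$ are compatible if there is $\mathcal{G}\in\mathrm{Ins}(\Omega\times\Lambda,\mathcal{H},\mathcal{K}\otimes\mathcal{V})$ with $\sum_{x}\mathrm{tr}_{\mathcal{K}}[\mathcal{G}_{(x,y)}(\varrho)]=\mathcal{J}_y(\varrho)$ for all $y$ and $\sum_y\mathrm{tr}_{\mathcal{V}}[\mathcal{G}_{(x,y)}(\varrho)]=\mathcal{I}_x(\varrho)$ for all $x$, for all states $\varrho$. A POVM $\mathsf{A}\in\mathcal{O}(\Omega,\mathcal{H})$ is identified with the instrument in $\mathrm{Ins}(\Omega,\mathcal{H},\mathbb{C})$ given by $\varrho\mapsto\mathrm{tr}[\mathsf{A}(x)\varrho]$, and a channel with a one-outcome instrument; compatibility involving POVMs or channels is defined through these identifications. *)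

theory Defs
  imports Complex_Main "Jordan_Normal_Form.Matrix"
begin

text \<open>A finite-dimensional complex Hilbert space of dimension d is represented by
  the coordinate space C^d; operators on it are complex d x d matrices.
  The tensor product C^a (x) C^b is C^(a*b) with index (i,j) mapped to i*b+j.\<close>

definition mtrace :: "complex mat \<Rightarrow> complex" where
  "mtrace A = (\<Sum>i<dim_row A. A $$ (i,i))"

definition pos_op :: "nat \<Rightarrow> complex mat \<Rightarrow> bool" where
  "pos_op d A \<longleftrightarrow> A \<in> carrier_mat d d \<and>
     (\<forall>v \<in> carrier_vec d. let z = (\<Sum>i<d. cnj (v $ i) * (A *\<^sub>v v) $ i) in Im z = 0 \<and> Re z \<ge> 0)"

definition state :: "nat \<Rightarrow> complex mat \<Rightarrow> bool" where
  "state d \<rho> \<longleftrightarrow> pos_op d \<rho> \<and> mtrace \<rho> = 1"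

definition lin_map :: "nat \<Rightarrow> nat \<Rightarrow> (complex mat \<Rightarrow> complex mat) \<Rightarrow> bool" where
  "lin_map n m E \<longleftrightarrow>
     (\<forall>X \<in> carrier_mat n n. E X \<in> carrier_mat m m) \<and>
     (\<forall>X \<in> carrier_mat n n. \<forall>Y \<in> carrier_mat n n. E (X + Y) = E X + E Y) \<and>
     (\<forall>X \<in> carrier_mat n n. \<forall>c. E (c \<cdot>\<^sub>m X) = c \<cdot>\<^sub>m E X)"

text \<open>Block (a,b) of a (k*n) x (k*n) matrix, viewed as an operator on C^k (x) C^n.\<close>
definition blk :: "nat \<Rightarrow> complex mat \<Rightarrow> nat \<Rightarrow> nat \<Rightarrow> complex mat" where
  "blk n X a b = mat n n (\<lambda>(p,q). X $$ (a*n+p, b*n+q))"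

text \<open>The ampliation id_k (x) E : L(C^k (x) C^n) -> L(C^k (x) C^m).\<close>
definition ampl :: "nat \<Rightarrow> nat \<Rightarrow> nat \<Rightarrow> (complex mat \<Rightarrow> complex mat) \<Rightarrow> complex mat \<Rightarrow> complex mat" where
  "ampl k n m E X = mat (k*m) (k*m)
     (\<lambda>(i,j). E (blk n X (i div m) (j div m)) $$ (i mod m, j mod m))"

definition completely_positive :: "nat \<Rightarrow> nat \<Rightarrow> (complex mat \<Rightarrow> complex mat) \<Rightarrow> bool" where
  "completely_positive n m E \<longleftrightarrow> lin_map n m E \<and>
     (\<forall>k X. pos_op (k*n) X \<longrightarrow> pos_op (k*m) (ampl k n m E X))"

definition trace_nonincreasing :: "nat \<Rightarrow> (complex mat \<Rightarrow> complex mat) \<Rightarrow> bool" where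
  "trace_nonincreasing n E \<longleftrightarrow> (\<forall>X. pos_op n X \<longrightarrow> Re (mtrace (E X)) \<le> Re (mtrace X))"

definition trace_preserving :: "nat \<Rightarrow> (complex mat \<Rightarrow> complex mat) \<Rightarrow> bool" where
  "trace_preserving n E \<longleftrightarrow> (\<forall>X \<in> carrier_mat n n. mtrace (E X) = mtrace X)"

definition msum :: "nat \<Rightarrow> ('a \<Rightarrow> complex mat) \<Rightarrow> 'a set \<Rightarrow> complex mat" where
  "msum d f S = mat d d (\<lambda>ij. \<Sum>x\<in>S. f x $$ ij)"

definition induced_channel :: "nat \<Rightarrow> ('x::finite \<Rightarrow> complex mat \<Rightarrow> complex mat) \<Rightarrow> complex mat \<Rightarrow> complex mat" where
  "induced_channel m I X = msum m (\<lambda>x. I x X) UNIV"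

definition instrument :: "nat \<Rightarrow> nat \<Rightarrow> ('x::finite \<Rightarrow> complex mat \<Rightarrow> complex mat) \<Rightarrow> bool" where
  "instrument n m I \<longleftrightarrow>
     (\<forall>x. completely_positive n m (I x) \<and> trace_nonincreasing n (I x)) \<and>
     trace_preserving n (induced_channel m I)"

definition induced_povm :: "nat \<Rightarrow> ('x \<Rightarrow> complex mat \<Rightarrow> complex mat) \<Rightarrow> 'x \<Rightarrow> complex mat" where
  "induced_povm n I x = (SOME A. A \<in> carrier_mat n n \<and>
      (\<forall>\<rho> \<in> carrier_mat n n. mtrace (A * \<rho>) = mtrace (I x \<rho>)))"

text \<open>A POVM identified with an instrument with output space C (dimension 1).\<close>
definition povm_ins :: "('x \<Rightarrow> complex mat) \<Rightarrow> 'x \<Rightarrow> complex mat \<Rightarrow> complex mat" where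
  "povm_ins A x \<rho> = mat 1 1 (\<lambda>_. mtrace (A x * \<rho>))"

text \<open>A channel identified with a one-outcome instrument.\<close>
definition chan_ins :: "(complex mat \<Rightarrow> complex mat) \<Rightarrow> unit \<Rightarrow> complex mat \<Rightarrow> complex mat" where
  "chan_ins \<Phi> u = \<Phi>"

definition ptrace1 :: "nat \<Rightarrow> nat \<Rightarrow> complex mat \<Rightarrow> complex mat" where
  "ptrace1 a b X = mat b b (\<lambda>(v,w). \<Sum>k<a. X $$ (k*b+v, k*b+w))"

definition ptrace2 :: "nat \<Rightarrow> nat \<Rightarrow> complex mat \<Rightarrow> complex mat" where
  "ptrace2 a b X = mat a a (\<lambda>(k,l). \<Sum>v<b. X $$ (k*b+v, l*b+v))"

definition compatible ::
  "nat \<Rightarrow> nat \<Rightarrow> nat \<Rightarrow> ('x::finite \<Rightarrow> complex mat \<Rightarrow> complex mat) \<Rightarrow> ('y::finite \<Rightarrow> complex mat \<Rightarrow> complex mat) \<Rightarrow> bool" where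
  "compatible n a b I J \<longleftrightarrow>
     (\<exists>G :: 'x \<times> 'y \<Rightarrow> complex mat \<Rightarrow> complex mat.
        instrument n (a*b) G \<and>
        (\<forall>\<rho>. state n \<rho> \<longrightarrow>
           (\<forall>y. msum b (\<lambda>x. ptrace1 a b (G (x,y) \<rho>)) UNIV = J y \<rho>) \<and>
           (\<forall>x. msum a (\<lambda>y. ptrace2 a b (G (x,y) \<rho>)) UNIV = I x \<rho>)))"

definition postproc ::
  "nat \<Rightarrow> nat \<Rightarrow> nat \<Rightarrow> ('x::finite \<Rightarrow> complex mat \<Rightarrow> complex mat) \<Rightarrow> ('y::finite \<Rightarrow> complex mat \<Rightarrow> complex mat) \<Rightarrow> bool" where
  "postproc n m v I J \<longleftrightarrow>
     (\<exists>R :: 'y \<Rightarrow> 'x \<Rightarrow> complex mat \<Rightarrow> complex mat.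
        (\<forall>y. instrument v m (R y)) \<and>
        (\<forall>x. \<forall>\<rho> \<in> carrier_mat n n. I x \<rho> = msum m (\<lambda>y. R y x (J y \<rho>)) UNIV))"

end

theory Submission
  imports Defs
begin

lemma sum_split_mult:
  fixes f :: "nat \<Rightarrow> 'a::comm_monoid_add"
  shows "(\<Sum>t<k*m. f t) = (\<Sum>i<k. \<Sum>q<m. f (i*m+q))"
proof -
  have "(\<Sum>t<k*m. f t) = (\<Sum>i<k. sum f {i*m..<i*m+m})"
    by (rule sum.nat_group[symmetric])
  also have "\<dots> = (\<Sum>i<k. \<Sum>q<m. f (i*m+q))"
  proof (rule sum.cong[OF refl])
    fix i
    have "sum f {0+i*m..<m+i*m} = (\<Sum>q\<in>{0..<m}. f (q+i*m))"
      by (rule sum.shift_bounds_nat_ivl)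
    then show "sum f {i*m..<i*m+m} = (\<Sum>q<m. f (i*m+q))"
      by (simp add: add.commute atLeast0LessThan)
  qed
  finally show ?thesis .
qed

definition qf :: "nat \<Rightarrow> complex mat \<Rightarrow> complex vec \<Rightarrow> complex" where
  "qf d X v = (\<Sum>i<d. \<Sum>j<d. cnj (v $ i) * X $$ (i,j) * v $ j)"

lemma qf_eq:
  assumes "X \<in> carrier_mat d d" "v \<in> carrier_vec d"
  shows "(\<Sum>i<d. cnj (v $ i) * (X *\<^sub>v v) $ i) = qf d X v"
  unfolding qf_def
proof (rule sum.cong[OF refl])
  fix i assume "i \<in> {..<d}"
  then have "(X *\<^sub>v v) $ i = (\<Sum>j<d. X $$ (i,j) * v $ j)"
    using assms by (auto simp: scalar_prod_def atLeast0LessThan)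
  then show "cnj (v $ i) * (X *\<^sub>v v) $ i = (\<Sum>j<d. cnj (v $ i) * X $$ (i, j) * v $ j)"
    by (simp add: sum_distrib_left mult.assoc)
qed

lemma pos_op_iff:
  "pos_op d X \<longleftrightarrow> X \<in> carrier_mat d d \<and> (\<forall>v\<in>carrier_vec d. Im (qf d X v) = 0 \<and> Re (qf d X v) \<ge> 0)"
proof -
  have "pos_op d X \<longleftrightarrow> X \<in> carrier_mat d d \<and> (\<forall>v\<in>carrier_vec d. Im (\<Sum>i<d. cnj (v $ i) * (X *\<^sub>v v) $ i) = 0 \<and> Re (\<Sum>i<d. cnj (v $ i) * (X *\<^sub>v v) $ i) \<ge> 0)"
    unfolding pos_op_def Let_def by simp
  also have "\<dots> \<longleftrightarrow> X \<in> carrier_mat d d \<and> (\<forall>v\<in>carrier_vec d. Im (qf d X v) = 0 \<and> Re (qf d X v) \<ge> 0)"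
    using qf_eq by (metis (no_types, lifting))
  finally show ?thesis .
qed

lemma mtrace_msum:
  assumes "finite S" "\<And>s. s \<in> S \<Longrightarrow> f s \<in> carrier_mat d d"
  shows "mtrace (msum d f S) = (\<Sum>s\<in>S. mtrace (f s))"
proof -
  have "mtrace (msum d f S) = (\<Sum>i<d. \<Sum>s\<in>S. f s $$ (i,i))"
    unfolding mtrace_def msum_def by simp
  also have "\<dots> = (\<Sum>s\<in>S. \<Sum>i<d. f s $$ (i,i))" by (rule sum.swap)
  also have "\<dots> = (\<Sum>s\<in>S. mtrace (f s))"
    unfolding mtrace_def using assms(2) by (auto intro!: sum.cong)
  finally show ?thesis .
qed

lemma msum_carrier[simp]: "msum d f S \<in> carrier_mat d d"
  unfolding msum_def by simp

lemma mtrace_add: "X \<in> carrier_mat d d \<Longrightarrow> Y \<in> carrier_mat d d \<Longrightarrow> mtrace (X + Y) = mtrace X + mtrace Y"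
  unfolding mtrace_def by (simp add: sum.distrib)

lemma mtrace_smult: "X \<in> carrier_mat d d \<Longrightarrow> mtrace (c \<cdot>\<^sub>m X) = c * mtrace X"
  unfolding mtrace_def by (simp add: sum_distrib_left)

lemma pos_op_diag:
  assumes "pos_op d X" "i < d"
  shows "Im (X $$ (i,i)) = 0 \<and> Re (X $$ (i,i)) \<ge> 0"
proof -
  have u: "unit_vec d i \<in> carrier_vec d" by simp
  have "qf d X (unit_vec d i) = X $$ (i,i)"
    unfolding qf_def using assms(2)
    by (simp add: unit_vec_def if_distrib[of cnj] cong: if_cong)
       (simp add: if_distrib[where f="\<lambda>z. z * _"] if_distrib[where f="\<lambda>z. _ * z"] sum.delta cong: if_cong)
  then show ?thesis using assms(1) u unfolding pos_op_iff by metis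
qed

lemma pos_op_trace: "pos_op d X \<Longrightarrow> Re (mtrace X) \<ge> 0"
  unfolding mtrace_def using pos_op_diag[of d X]
  by (auto simp: pos_op_def intro!: sum_nonneg)


lemma blk_carrier[simp]: "blk n X a b \<in> carrier_mat n n"
  unfolding blk_def by simp

lemma lin_map_carrier: "lin_map n m E \<Longrightarrow> X \<in> carrier_mat n n \<Longrightarrow> E X \<in> carrier_mat m m"
  unfolding lin_map_def by blast

lemma ampl1:
  assumes "lin_map n m E" "X \<in> carrier_mat n n"
  shows "ampl 1 n m E X = E X"
proof -
  have b: "blk n X 0 0 = X" using assms(2) unfolding blk_def by (auto intro!: eq_matI)
  show ?thesis using lin_map_carrier[OF assms]
    unfolding ampl_def by (simp add: b, intro eq_matI, auto simp: b)
qed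

lemma cp_pos:
  assumes "completely_positive n m E" "pos_op n X"
  shows "pos_op m (E X)"
proof -
  have X: "X \<in> carrier_mat n n" using assms(2) unfolding pos_op_def by auto
  have l: "lin_map n m E" using assms(1) unfolding completely_positive_def by auto
  have "pos_op (1*m) (ampl 1 n m E X)" using assms unfolding completely_positive_def by (metis mult_1)
  then show ?thesis using ampl1[OF l X] by simp
qed

lemma blk_ampl:
  assumes "lin_map n m E" "a < k" "b < k"
  shows "blk m (ampl k n m E X) a b = E (blk n X a b)"
proof -
  have c: "E (blk n X a b) \<in> carrier_mat m m" using lin_map_carrier[OF assms(1)] by simp
  show ?thesis
  proof (rule eq_matI)
    fix p q assume pq: "p < dim_row (E (blk n X a b))" "q < dim_col (E (blk n X a b))"
    then have pq': "p < m" "q < m" using c by auto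
    have "a*m+p < (a+1)*m" using pq' by simp
    moreover have "(a+1)*m \<le> k*m" using assms(2) by (intro mult_right_mono) auto
    moreover have "b*m+q < (b+1)*m" using pq' by simp
    moreover have "(b+1)*m \<le> k*m" using assms(3) by (intro mult_right_mono) auto
    ultimately have "a*m+p < k*m \<and> b*m+q < k*m" by linarith
    then show "blk m (ampl k n m E X) a b $$ (p, q) = E (blk n X a b) $$ (p, q)"
      using pq' unfolding blk_def[of m] ampl_def by simp
  qed (use c in \<open>auto simp: blk_def\<close>)
qed

lemma ampl_comp:
  assumes "lin_map n m E"
  shows "ampl k m l F (ampl k n m E X) = ampl k n l (\<lambda>Y. F (E Y)) X"
proof (rule eq_matI)
  fix i j assume ij: "i < dim_row (ampl k n l (\<lambda>Y. F (E Y)) X)" "j < dim_col (ampl k n l (\<lambda>Y. F (E Y)) X)"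
  then have ij': "i < k*l" "j < k*l" unfolding ampl_def by auto
  have "i div l < k" "j div l < k" using ij' by (simp_all add: less_mult_imp_div_less)
  then show "ampl k m l F (ampl k n m E X) $$ (i, j) = ampl k n l (\<lambda>Y. F (E Y)) X $$ (i, j)"
    using ij' blk_ampl[OF assms] unfolding ampl_def[of k m l] ampl_def[of k n l] by simp
qed (auto simp: ampl_def)

lemma lin_comp:
  assumes "lin_map n m E" "lin_map m l F"
  shows "lin_map n l (\<lambda>X. F (E X))"
  using assms unfolding lin_map_def by auto

lemma cp_comp:
  assumes "completely_positive n m E" "completely_positive m l F"
  shows "completely_positive n l (\<lambda>X. F (E X))"
proof -
  have l: "lin_map n m E" "lin_map m l F" using assms unfolding completely_positive_def by auto
  show ?thesis unfolding completely_positive_def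
  proof (intro conjI allI impI)
    show "lin_map n l (\<lambda>X. F (E X))" using lin_comp[OF l] .
    fix k X assume "pos_op (k*n) X"
    then have "pos_op (k*m) (ampl k n m E X)" using assms(1) unfolding completely_positive_def by auto
    then have "pos_op (k*l) (ampl k m l F (ampl k n m E X))" using assms(2) unfolding completely_positive_def by auto
    then show "pos_op (k*l) (ampl k n l (\<lambda>X. F (E X)) X)" using ampl_comp[OF l(1)] by simp
  qed
qed


lemma lin_msum:
  assumes "finite S" "\<And>x. x \<in> S \<Longrightarrow> lin_map n m (E x)"
  shows "lin_map n m (\<lambda>X. msum m (\<lambda>x. E x X) S)"
  unfolding lin_map_def
proof (intro conjI ballI allI)
  fix X Y :: "complex mat" assume XY: "X \<in> carrier_mat n n" "Y \<in> carrier_mat n n"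
  have "\<And>x. x \<in> S \<Longrightarrow> E x (X+Y) = E x X + E x Y" "\<And>x. x \<in> S \<Longrightarrow> E x X \<in> carrier_mat m m"
    "\<And>x. x \<in> S \<Longrightarrow> E x Y \<in> carrier_mat m m"
    using assms(2) XY unfolding lin_map_def by auto
  then show "msum m (\<lambda>x. E x (X + Y)) S = msum m (\<lambda>x. E x X) S + msum m (\<lambda>x. E x Y) S"
    unfolding msum_def apply (intro eq_matI) apply (auto simp: sum.distrib[symmetric] intro!: sum.cong)
    by (metis carrier_matD index_add_mat(1))
next
  fix X :: "complex mat" and c assume X: "X \<in> carrier_mat n n"
  have "\<And>x. x \<in> S \<Longrightarrow> E x (c \<cdot>\<^sub>m X) = c \<cdot>\<^sub>m E x X" "\<And>x. x \<in> S \<Longrightarrow> E x X \<in> carrier_mat m m"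
    using assms(2) X unfolding lin_map_def by auto
  then show "msum m (\<lambda>x. E x (c \<cdot>\<^sub>m X)) S = c \<cdot>\<^sub>m msum m (\<lambda>x. E x X) S"
    unfolding msum_def apply (intro eq_matI) apply (auto simp: sum_distrib_left intro!: sum.cong)
    by (metis carrier_matD index_smult_mat(1))
qed simp

lemma ampl_msum:
  "ampl k n m (\<lambda>X. msum m (\<lambda>x. E x X) S) X = msum (k*m) (\<lambda>x. ampl k n m (E x) X) S"
proof (rule eq_matI)
  fix i j assume ij: "i < dim_row (msum (k*m) (\<lambda>x. ampl k n m (E x) X) S)" "j < dim_col (msum (k*m) (\<lambda>x. ampl k n m (E x) X) S)"
  then have ij': "i < k*m" "j < k*m" by (auto simp: msum_def)
  then have "m > 0" by (cases m) auto
  then have "i mod m < m" "j mod m < m" by auto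
  then show "ampl k n m (\<lambda>X. msum m (\<lambda>x. E x X) S) X $$ (i, j) = msum (k*m) (\<lambda>x. ampl k n m (E x) X) S $$ (i, j)"
    using ij' unfolding ampl_def msum_def by simp
qed (auto simp: ampl_def msum_def)

lemma qf_msum:
  "qf d (msum d f S) v = (\<Sum>x\<in>S. qf d (f x) v)"
proof -
  have "qf d (msum d f S) v = (\<Sum>i<d. \<Sum>j<d. \<Sum>x\<in>S. cnj (v $ i) * f x $$ (i,j) * v $ j)"
    unfolding qf_def msum_def by (simp add: sum_distrib_left sum_distrib_right)
  also have "\<dots> = (\<Sum>x\<in>S. qf d (f x) v)"
    unfolding qf_def by (simp add: sum.swap[of _ S])
  finally show ?thesis .
qed

lemma pos_msum:
  assumes "\<And>x. x \<in> S \<Longrightarrow> pos_op d (f x)"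
  shows "pos_op d (msum d f S)"
  unfolding pos_op_iff
proof (intro conjI ballI)
  fix v :: "complex vec" assume v: "v \<in> carrier_vec d"
  have "\<And>x. x \<in> S \<Longrightarrow> Im (qf d (f x) v) = 0 \<and> Re (qf d (f x) v) \<ge> 0"
    using assms v unfolding pos_op_iff by auto
  then show "Im (qf d (msum d f S) v) = 0" "Re (qf d (msum d f S) v) \<ge> 0"
    unfolding qf_msum by (auto simp: Im_sum Re_sum intro!: sum_nonneg)
qed simp

lemma cp_msum:
  assumes "finite S" "\<And>x. x \<in> S \<Longrightarrow> completely_positive n m (E x)"
  shows "completely_positive n m (\<lambda>X. msum m (\<lambda>x. E x X) S)"
  unfolding completely_positive_def
proof (intro conjI allI impI)
  show "lin_map n m (\<lambda>X. msum m (\<lambda>x. E x X) S)"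
    using assms lin_msum unfolding completely_positive_def by blast
  fix k X assume "pos_op (k*n) X"
  then have "\<And>x. x \<in> S \<Longrightarrow> pos_op (k*m) (ampl k n m (E x) X)"
    using assms(2) unfolding completely_positive_def by auto
  then show "pos_op (k*m) (ampl k n m (\<lambda>X. msum m (\<lambda>x. E x X) S) X)"
    unfolding ampl_msum by (rule pos_msum)
qed


definition trm :: "complex mat \<Rightarrow> complex mat" where
  "trm Y = mat 1 1 (\<lambda>_. mtrace Y)"

lemma lin_trm: "lin_map m 1 trm"
  unfolding lin_map_def trm_def
  by (auto intro!: eq_matI simp: mtrace_add mtrace_smult)

lemma ampl_trm:
  "ampl k m 1 trm X = mat k k (\<lambda>(i,j). \<Sum>p<m. X $$ (i*m+p, j*m+p))"
  unfolding ampl_def trm_def mtrace_def blk_def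
  by (intro eq_matI) auto

lemma sum_if_const: "(\<Sum>i\<in>A. if P then f i else 0) = (if P then sum f A else 0)"
  by auto

lemma qf_compress:
  assumes v: "v \<in> carrier_vec k" and p: "p < m"
  defines "w \<equiv> vec (k*m) (\<lambda>t. if t mod m = p then v $ (t div m) else 0)"
  shows "qf (k*m) X w = (\<Sum>i<k. \<Sum>j<k. cnj (v $ i) * X $$ (i*m+p, j*m+p) * v $ j)"
proof -
  have wi: "w $ (i*m+q) = (if q = p then v $ i else 0)" if "i < k" "q < m" for i q
  proof -
    have "i*m+q < (i+1)*m" using that by simp
    also have "(i+1)*m \<le> k*m" using that by (intro mult_right_mono) auto
    finally have "i*m+q < k*m" .
    then show ?thesis unfolding w_def using that by simp
  qed
  have "qf (k*m) X w = (\<Sum>i<k. \<Sum>q<m. \<Sum>j<k. \<Sum>r<m. cnj (w $ (i*m+q)) * X $$ (i*m+q, j*m+r) * w $ (j*m+r))"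
    unfolding qf_def sum_split_mult ..
  also have "\<dots> = (\<Sum>i<k. \<Sum>q<m. \<Sum>j<k. \<Sum>r<m. (if q = p then cnj (v $ i) else 0) * X $$ (i*m+q, j*m+r) * (if r = p then v $ j else 0))"
    by (intro sum.cong refl) (simp add: wi)
  also have "\<dots> = (\<Sum>i<k. \<Sum>j<k. cnj (v $ i) * X $$ (i*m+p, j*m+p) * v $ j)"
    using p by (simp add: if_distrib[where f="\<lambda>z. z * _"] if_distrib[where f="\<lambda>z. _ * z"] sum.delta sum.swap[of _ "{..<m}"] sum_if_const cong: if_cong)
  finally show ?thesis .
qed

lemma cp_trm: "completely_positive m 1 trm"
  unfolding completely_positive_def
proof (intro conjI allI impI)
  show "lin_map m 1 trm" by (rule lin_trm)
  fix k X assume X: "pos_op (k*m) X"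
  show "pos_op (k*1) (ampl k m 1 trm X)"
    unfolding pos_op_iff ampl_trm
  proof (intro conjI ballI)
    fix v :: "complex vec" assume v0: "v \<in> carrier_vec (k*1)"
    then have v: "v \<in> carrier_vec k" by simp
    define w where "w p = vec (k*m) (\<lambda>t. if t mod m = p then v $ (t div m) else 0)" for p
    have w: "w p \<in> carrier_vec (k*m)" for p unfolding w_def by simp
    have "qf (k*1) (mat k k (\<lambda>(i,j). \<Sum>p<m. X $$ (i*m+p, j*m+p))) v
       = (\<Sum>i<k. \<Sum>j<k. \<Sum>p<m. cnj (v $ i) * X $$ (i*m+p, j*m+p) * v $ j)"
      unfolding qf_def by (simp add: sum_distrib_left sum_distrib_right)
    also have "\<dots> = (\<Sum>p<m. \<Sum>i<k. \<Sum>j<k. cnj (v $ i) * X $$ (i*m+p, j*m+p) * v $ j)"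
      by (simp add: sum.swap[of _ "{..<m}"])
    also have "\<dots> = (\<Sum>p<m. qf (k*m) X (w p))"
      using qf_compress[OF v] unfolding w_def by simp
    finally have eq: "qf (k*1) (mat k k (\<lambda>(i,j). \<Sum>p<m. X $$ (i*m+p, j*m+p))) v = (\<Sum>p<m. qf (k*m) X (w p))" .
    have "Im (qf (k*m) X (w p)) = 0 \<and> Re (qf (k*m) X (w p)) \<ge> 0" for p
      using X w unfolding pos_op_iff by blast
    then show "Im (qf (k*1) (mat k k (\<lambda>(i,j). \<Sum>p<m. X $$ (i*m+p, j*m+p))) v) = 0"
      "Re (qf (k*1) (mat k k (\<lambda>(i,j). \<Sum>p<m. X $$ (i*m+p, j*m+p))) v) \<ge> 0"
      unfolding eq by (auto simp: Im_sum Re_sum intro!: sum_nonneg)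
  qed simp
qed


lemma lin_zero:
  assumes "lin_map n m E"
  shows "E (0\<^sub>m n n) = 0\<^sub>m m m"
proof -
  have "E (0\<^sub>m n n) = E (0 \<cdot>\<^sub>m 0\<^sub>m n n)" by simp
  also have "\<dots> = 0 \<cdot>\<^sub>m E (0\<^sub>m n n)" using assms zero_carrier_mat unfolding lin_map_def by blast
  also have "\<dots> = 0\<^sub>m m m" using lin_map_carrier[OF assms, of "0\<^sub>m n n"] by (intro eq_matI) auto
  finally show ?thesis .
qed

lemma msum_empty: "msum d f {} = 0\<^sub>m d d"
  unfolding msum_def by (intro eq_matI) auto

lemma msum_insert:
  assumes "finite S" "a \<notin> S" "f a \<in> carrier_mat d d"
  shows "msum d f (insert a S) = f a + msum d f S"
  using assms unfolding msum_def by (intro eq_matI) auto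

lemma lin_msum_apply:
  assumes "lin_map n m E" "finite S" "\<And>s. s \<in> S \<Longrightarrow> f s \<in> carrier_mat n n"
  shows "E (msum n f S) = msum m (\<lambda>s. E (f s)) S"
  using assms(2,3)
proof (induction S rule: finite_induct)
  case empty
  then show ?case using lin_zero[OF assms(1)] by (simp add: msum_empty)
next
  case (insert a S)
  have fa: "f a \<in> carrier_mat n n" using insert by auto
  have "E (msum n f (insert a S)) = E (f a + msum n f S)" using insert fa by (simp add: msum_insert)
  also have "\<dots> = E (f a) + E (msum n f S)" using assms(1) fa unfolding lin_map_def by simp
  also have "\<dots> = E (f a) + msum m (\<lambda>s. E (f s)) S" using insert by simp
  also have "\<dots> = msum m (\<lambda>s. E (f s)) (insert a S)"
    using insert lin_map_carrier[OF assms(1) fa] by (simp add: msum_insert)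
  finally show ?case .
qed

lemma if_conj_split: "(if a \<and> b then x else 0) = (if a then (if b then x else 0) else 0)"
  by simp

definition ee :: "nat \<Rightarrow> nat \<Rightarrow> nat \<Rightarrow> complex mat" where
  "ee n i j = mat n n (\<lambda>(a,b). if a = i \<and> b = j then 1 else 0)"

lemma mat_decomp:
  assumes "X \<in> carrier_mat n n"
  shows "X = msum n (\<lambda>(i,j). X $$ (i,j) \<cdot>\<^sub>m ee n i j) ({..<n} \<times> {..<n})"
proof (rule eq_matI)
  fix a b assume ab: "a < dim_row (msum n (\<lambda>(i,j). X $$ (i,j) \<cdot>\<^sub>m ee n i j) ({..<n} \<times> {..<n}))"
    "b < dim_col (msum n (\<lambda>(i,j). X $$ (i,j) \<cdot>\<^sub>m ee n i j) ({..<n} \<times> {..<n}))"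
  then have ab': "a < n" "b < n" by (auto simp: msum_def)
  have "msum n (\<lambda>(i,j). X $$ (i,j) \<cdot>\<^sub>m ee n i j) ({..<n} \<times> {..<n}) $$ (a,b)
      = (\<Sum>(i,j)\<in>{..<n} \<times> {..<n}. X $$ (i,j) * (if a = i \<and> b = j then 1 else 0))"
    using ab' unfolding msum_def ee_def by (auto intro!: sum.cong)
  also have "\<dots> = (\<Sum>i<n. \<Sum>j<n. X $$ (i,j) * (if a = i \<and> b = j then 1 else 0))"
    by (simp add: sum.cartesian_product)
  also have "\<dots> = X $$ (a,b)"
  proof -
    have "(\<Sum>j<n. X $$ (i,j) * (if a = i \<and> b = j then 1 else 0)) = (if i = a then X $$ (a,b) else 0)" for i
    proof (cases "i = a")
      case True
      have "(\<Sum>j<n. X $$ (a,j) * (if b = j then 1 else 0)) = (\<Sum>j<n. if b = j then X $$ (a,j) else 0)"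
        by (rule sum.cong) auto
      also have "\<dots> = X $$ (a,b)" using ab' by (simp add: sum.delta')
      finally show ?thesis using True by simp
    qed simp
    then show ?thesis using ab' by (simp add: sum.delta)
  qed
  finally show "X $$ (a, b) = msum n (\<lambda>(i,j). X $$ (i,j) \<cdot>\<^sub>m ee n i j) ({..<n} \<times> {..<n}) $$ (a, b)" by simp
qed (use assms in \<open>auto simp: msum_def\<close>)

lemma povm_exists:
  assumes "lin_map n m E"
  shows "\<exists>A. A \<in> carrier_mat n n \<and> (\<forall>\<rho> \<in> carrier_mat n n. mtrace (A * \<rho>) = mtrace (E \<rho>))"
proof (intro exI conjI ballI)
  define A where "A = mat n n (\<lambda>(a,b). mtrace (E (ee n b a)))"
  show "A \<in> carrier_mat n n" unfolding A_def by simp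
  fix \<rho> :: "complex mat" assume r: "\<rho> \<in> carrier_mat n n"
  have eec: "ee n i j \<in> carrier_mat n n" for i j unfolding ee_def by simp
  have "E \<rho> = E (msum n (\<lambda>(i,j). \<rho> $$ (i,j) \<cdot>\<^sub>m ee n i j) ({..<n} \<times> {..<n}))"
    using mat_decomp[OF r] by simp
  also have "\<dots> = msum m (\<lambda>s. E ((\<lambda>(i,j). \<rho> $$ (i,j) \<cdot>\<^sub>m ee n i j) s)) ({..<n} \<times> {..<n})"
    by (rule lin_msum_apply[OF assms]) (auto simp: eec)
  finally have "mtrace (E \<rho>) = (\<Sum>s\<in>{..<n} \<times> {..<n}. mtrace (E ((\<lambda>(i,j). \<rho> $$ (i,j) \<cdot>\<^sub>m ee n i j) s)))"
    using lin_map_carrier[OF assms] eec by (simp add: mtrace_msum split: prod.split)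
  also have "\<dots> = (\<Sum>(i,j)\<in>{..<n} \<times> {..<n}. \<rho> $$ (i,j) * mtrace (E (ee n i j)))"
  proof (rule sum.cong[OF refl], clarify)
    fix i j
    have "E (\<rho> $$ (i,j) \<cdot>\<^sub>m ee n i j) = \<rho> $$ (i,j) \<cdot>\<^sub>m E (ee n i j)"
      using assms eec unfolding lin_map_def by blast
    then show "mtrace (E (\<rho> $$ (i,j) \<cdot>\<^sub>m ee n i j)) = \<rho> $$ (i,j) * mtrace (E (ee n i j))"
      using mtrace_smult[OF lin_map_carrier[OF assms eec]] by simp
  qed
  also have "\<dots> = (\<Sum>i<n. \<Sum>j<n. \<rho> $$ (i,j) * mtrace (E (ee n i j)))"
    by (simp add: sum.cartesian_product)
  also have "\<dots> = (\<Sum>j<n. \<Sum>i<n. \<rho> $$ (i,j) * mtrace (E (ee n i j)))"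
    by (rule sum.swap)
  also have "\<dots> = mtrace (A * \<rho>)"
  proof -
    have "(A * \<rho>) $$ (j,j) = (\<Sum>i<n. \<rho> $$ (i,j) * mtrace (E (ee n i j)))" if "j < n" for j
      using r that unfolding A_def by (simp add: scalar_prod_def atLeast0LessThan mult.commute)
    moreover have "dim_row (A * \<rho>) = n" unfolding A_def by simp
    ultimately show ?thesis unfolding mtrace_def by simp
  qed
  finally show "mtrace (A * \<rho>) = mtrace (E \<rho>)" by simp
qed

lemma povm_prop:
  assumes "lin_map n m E" "\<rho> \<in> carrier_mat n n"
  shows "mtrace (induced_povm n (\<lambda>_. E) x * \<rho>) = mtrace (E \<rho>)"
  using someI_ex[OF povm_exists[OF assms(1)]] assms(2) unfolding induced_povm_def by blast


lemma inst_cp: "instrument n m I \<Longrightarrow> completely_positive n m (I x)"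
  unfolding instrument_def by blast

lemma inst_lin: "instrument n m I \<Longrightarrow> lin_map n m (I x)"
  using inst_cp unfolding completely_positive_def by blast

lemma inst_tni: "instrument n m I \<Longrightarrow> pos_op n X \<Longrightarrow> Re (mtrace (I x X)) \<le> Re (mtrace X)"
  unfolding instrument_def trace_nonincreasing_def by blast

lemma inst_tp:
  assumes "instrument n m I" "X \<in> carrier_mat n n"
  shows "(\<Sum>x\<in>UNIV. mtrace (I x X)) = mtrace X"
proof -
  have "mtrace X = mtrace (induced_channel m I X)"
    using assms unfolding instrument_def trace_preserving_def by metis
  also have "\<dots> = (\<Sum>x\<in>UNIV. mtrace (I x X))"
    unfolding induced_channel_def using lin_map_carrier[OF inst_lin[OF assms(1)] assms(2)]
    by (intro mtrace_msum) auto
  finally show ?thesis by simp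
qed

lemma inst_intro:
  assumes "\<And>x. completely_positive n m (I x)"
    and "\<And>x X. pos_op n X \<Longrightarrow> Re (mtrace (I x X)) \<le> Re (mtrace X)"
    and "\<And>X. X \<in> carrier_mat n n \<Longrightarrow> (\<Sum>x\<in>UNIV. mtrace (I x X)) = mtrace X"
  shows "instrument n m I"
  unfolding instrument_def trace_nonincreasing_def trace_preserving_def
proof (intro conjI allI impI ballI)
  fix X :: "complex mat" assume X: "X \<in> carrier_mat n n"
  have "mtrace (induced_channel m I X) = (\<Sum>x\<in>UNIV. mtrace (I x X))"
    unfolding induced_channel_def
    using lin_map_carrier[OF conjunct1[OF assms(1)[unfolded completely_positive_def]] X]
    by (intro mtrace_msum) auto
  then show "mtrace (induced_channel m I X) = mtrace X" using assms(3)[OF X] by simp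
qed (use assms in auto)

lemma sum_prod_univ:
  fixes g :: "'a::finite \<times> 'b::finite \<Rightarrow> 'c::comm_monoid_add"
  shows "(\<Sum>z\<in>UNIV. g z) = (\<Sum>x\<in>UNIV. \<Sum>y\<in>UNIV. g (x,y))"
  by (simp add: sum.cartesian_product UNIV_Times_UNIV[symmetric] del: UNIV_Times_UNIV)

lemma inst_comp:
  fixes R :: "'y::finite \<Rightarrow> 'x::finite \<Rightarrow> complex mat \<Rightarrow> complex mat"
  assumes R: "\<And>y. instrument v m (R y)" and J: "instrument n v J"
  shows "instrument n m (\<lambda>(x,y) \<rho>. R y x (J y \<rho>))"
proof (rule inst_intro)
  fix z :: "'x \<times> 'y"
  obtain x y where z: "z = (x,y)" by (cases z)
  show "completely_positive n m ((\<lambda>(x,y) \<rho>. R y x (J y \<rho>)) z)"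
    unfolding z using cp_comp[OF inst_cp[OF J] inst_cp[OF R]] by simp
  fix X assume X: "pos_op n X"
  have "pos_op v (J y X)" by (rule cp_pos[OF inst_cp[OF J] X])
  then have "Re (mtrace (R y x (J y X))) \<le> Re (mtrace (J y X))" by (rule inst_tni[OF R])
  also have "\<dots> \<le> Re (mtrace X)" by (rule inst_tni[OF J X])
  finally show "Re (mtrace ((\<lambda>(x,y) \<rho>. R y x (J y \<rho>)) z X)) \<le> Re (mtrace X)" unfolding z by simp
next
  fix X :: "complex mat" assume X: "X \<in> carrier_mat n n"
  have "(\<Sum>z\<in>UNIV. mtrace ((\<lambda>(x,y) \<rho>. R y x (J y \<rho>)) z X)) = (\<Sum>x\<in>UNIV. \<Sum>y\<in>UNIV. mtrace (R y x (J y X)))"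
    by (simp add: sum_prod_univ)
  also have "\<dots> = (\<Sum>y\<in>UNIV. \<Sum>x\<in>UNIV. mtrace (R y x (J y X)))" by (rule sum.swap)
  also have "\<dots> = (\<Sum>y\<in>UNIV. mtrace (J y X))"
    using inst_tp[OF R] lin_map_carrier[OF inst_lin[OF J] X] by simp
  also have "\<dots> = mtrace X" by (rule inst_tp[OF J X])
  finally show "(\<Sum>z\<in>UNIV. mtrace ((\<lambda>(x,y) \<rho>. R y x (J y \<rho>)) z X)) = mtrace X" .
qed

lemma inst_marg:
  fixes G :: "'x::finite \<times> 'y::finite \<Rightarrow> complex mat \<Rightarrow> complex mat"
  assumes G: "instrument n m G"
  shows "instrument n m (\<lambda>(u::unit,y) X. msum m (\<lambda>x. G (x,y) X) UNIV)"
proof (rule inst_intro)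
  fix z :: "unit \<times> 'y"
  obtain u y where z: "z = (u,y)" by (cases z)
  show "completely_positive n m ((\<lambda>(u::unit,y) X. msum m (\<lambda>x. G (x,y) X) UNIV) z)"
    unfolding z using cp_msum[of UNIV n m "\<lambda>x. G (x,y)"] inst_cp[OF G] by simp
  fix X assume X: "pos_op n X"
  have Xc: "X \<in> carrier_mat n n" using X unfolding pos_op_def by auto
  have nn: "0 \<le> Re (mtrace (G w X))" for w by (rule pos_op_trace[OF cp_pos[OF inst_cp[OF G] X]])
  have "Re (mtrace (msum m (\<lambda>x. G (x,y) X) UNIV)) = (\<Sum>x\<in>UNIV. Re (mtrace (G (x,y) X)))"
    using lin_map_carrier[OF inst_lin[OF G] Xc] by (simp add: mtrace_msum Re_sum)
  also have "\<dots> \<le> (\<Sum>x\<in>UNIV. \<Sum>y'\<in>UNIV. Re (mtrace (G (x,y') X)))"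
    by (intro sum_mono member_le_sum) (auto simp: nn)
  also have "\<dots> = Re (\<Sum>w\<in>UNIV. mtrace (G w X))" by (simp add: sum_prod_univ Re_sum)
  also have "\<dots> = Re (mtrace X)" using inst_tp[OF G Xc] by simp
  finally show "Re (mtrace ((\<lambda>(u::unit,y) X. msum m (\<lambda>x. G (x,y) X) UNIV) z X)) \<le> Re (mtrace X)"
    unfolding z by simp
next
  fix X :: "complex mat" assume X: "X \<in> carrier_mat n n"
  have "(\<Sum>z\<in>UNIV. mtrace ((\<lambda>(u::unit,y) X. msum m (\<lambda>x. G (x,y) X) UNIV) z X))
      = (\<Sum>y\<in>UNIV. \<Sum>x\<in>UNIV. mtrace (G (x,y) X))"
    using lin_map_carrier[OF inst_lin[OF G] X] by (simp add: sum_prod_univ mtrace_msum UNIV_unit)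
  also have "\<dots> = (\<Sum>x\<in>UNIV. \<Sum>y\<in>UNIV. mtrace (G (x,y) X))" by (rule sum.swap)
  also have "\<dots> = mtrace X" using inst_tp[OF G X] by (simp add: sum_prod_univ)
  finally show "(\<Sum>z\<in>UNIV. mtrace ((\<lambda>(u::unit,y) X. msum m (\<lambda>x. G (x,y) X) UNIV) z X)) = mtrace X" .
qed

lemma mtrace_trm[simp]: "mtrace (trm Y) = mtrace Y"
  unfolding trm_def mtrace_def by simp

lemma inst_tr:
  assumes G: "instrument n m G"
  shows "instrument n 1 (\<lambda>z X. trm (G z X))"
proof (rule inst_intro)
  fix z
  show "completely_positive n 1 (\<lambda>X. trm (G z X))" by (rule cp_comp[OF inst_cp[OF G] cp_trm])
  fix X assume "pos_op n X"
  then show "Re (mtrace (trm (G z X))) \<le> Re (mtrace X)" using inst_tni[OF G] by simp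
next
  fix X :: "complex mat" assume "X \<in> carrier_mat n n"
  then show "(\<Sum>z\<in>UNIV. mtrace (trm (G z X))) = mtrace X" using inst_tp[OF G] by simp
qed


lemma ptrace1_1: "Y \<in> carrier_mat a a \<Longrightarrow> ptrace1 a 1 Y = trm Y"
  unfolding ptrace1_def trm_def mtrace_def by (intro eq_matI) auto

lemma ptrace2_1: "Y \<in> carrier_mat a a \<Longrightarrow> ptrace2 a 1 Y = Y"
  unfolding ptrace2_def by (intro eq_matI) auto

lemmas ptrace1_1' = ptrace1_1[simplified] and ptrace2_1' = ptrace2_1[simplified]

lemma trm_carrier[simp]: "trm Y \<in> carrier_mat 1 1"
  unfolding trm_def by simp

lemma trm_trm[simp]: "trm (trm Y) = trm Y"
  by (metis mtrace_trm trm_def)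

lemma ptrace1_trm[simp]: "ptrace1 (Suc 0) (Suc 0) (trm Y) = trm Y"
  using ptrace1_1[OF trm_carrier[of Y]] by simp

lemma ptrace2_trm[simp]: "ptrace2 (Suc 0) (Suc 0) (trm Y) = trm Y"
  using ptrace2_1[OF trm_carrier[of Y]] by simp

lemma msum_trm:
  assumes "finite S" "\<And>s. s \<in> S \<Longrightarrow> f s \<in> carrier_mat d d"
  shows "msum 1 (\<lambda>s. trm (f s)) S = trm (msum d f S)"
  using mtrace_msum[OF assms] unfolding msum_def[of 1] trm_def[of "msum d f S"]
  by (intro eq_matI) (auto simp: trm_def)

lemma msum_swap: "msum d (\<lambda>y. msum d (\<lambda>x. f x y) A) B = msum d (\<lambda>x. msum d (\<lambda>y. f x y) B) A"
  unfolding msum_def by (intro eq_matI) (auto intro: sum.swap)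

lemma povm_ins_val:
  assumes "instrument n m J" "\<rho> \<in> carrier_mat n n"
  shows "povm_ins (induced_povm n J) y \<rho> = trm (J y \<rho>)"
proof -
  have "induced_povm n J y = induced_povm n (\<lambda>_. J y) y" unfolding induced_povm_def by simp
  moreover have "mtrace (induced_povm n (\<lambda>_. J y) y * \<rho>) = mtrace (J y \<rho>)"
    by (rule povm_prop[OF inst_lin[OF assms(1)] assms(2)])
  ultimately show ?thesis unfolding povm_ins_def trm_def by simp
qed

theorem proposition5:
  fixes dH dK dV :: nat
    and I :: "'x::finite \<Rightarrow> complex mat \<Rightarrow> complex mat"
    and J :: "'y::finite \<Rightarrow> complex mat \<Rightarrow> complex mat"
  assumes "instrument dH dK I"
    and "instrument dH dV J"
    and "postproc dH dK dV I J"
  shows "compatible dH dK 1 I (povm_ins (induced_povm dH J)) \<and>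
    compatible dH dK 1 (chan_ins (induced_channel dK I)) (povm_ins (induced_povm dH J)) \<and>
    compatible dH 1 1 (povm_ins (induced_povm dH I)) (povm_ins (induced_povm dH J))"
proof -
  note Iins = assms(1) and Jins = assms(2)
  obtain R :: "'y \<Rightarrow> 'x \<Rightarrow> complex mat \<Rightarrow> complex mat" where
    R: "\<And>y. instrument dV dK (R y)" and
    RI: "\<And>x \<rho>. \<rho> \<in> carrier_mat dH dH \<Longrightarrow> I x \<rho> = msum dK (\<lambda>y. R y x (J y \<rho>)) UNIV"
    using assms(3) unfolding postproc_def by blast
  define G1 :: "'x \<times> 'y \<Rightarrow> complex mat \<Rightarrow> complex mat" where "G1 = (\<lambda>(x,y) \<rho>. R y x (J y \<rho>))"
  have inst1: "instrument dH dK G1" unfolding G1_def by (rule inst_comp[OF R Jins])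
  have Jc: "J y \<rho> \<in> carrier_mat dV dV" if "\<rho> \<in> carrier_mat dH dH" for y \<rho>
    using lin_map_carrier[OF inst_lin[OF Jins] that] .
  have Rc: "R y x (J y \<rho>) \<in> carrier_mat dK dK" if "\<rho> \<in> carrier_mat dH dH" for x y \<rho>
    using lin_map_carrier[OF inst_lin[OF R] Jc[OF that]] .
  have T1: "msum 1 (\<lambda>x. trm (R y x (J y \<rho>))) UNIV = trm (J y \<rho>)" if "\<rho> \<in> carrier_mat dH dH" for y \<rho>
  proof -
    have "msum 1 (\<lambda>x. trm (R y x (J y \<rho>))) UNIV = trm (msum dK (\<lambda>x. R y x (J y \<rho>)) UNIV)"
      using Rc[OF that] by (intro msum_trm) auto
    also have "\<dots> = trm (J y \<rho>)"
      using inst_tp[OF R Jc[OF that]] Rc[OF that] unfolding trm_def by (simp add: mtrace_msum)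
    finally show ?thesis .
  qed
  let ?PJ = "povm_ins (induced_povm dH J)"
  have c1: "compatible dH dK 1 I ?PJ"
    unfolding compatible_def
  proof (intro exI conjI allI impI)
    show "instrument dH (dK*1) G1" using inst1 by simp
    fix \<rho> y assume "state dH \<rho>"
    then have r: "\<rho> \<in> carrier_mat dH dH" unfolding state_def pos_op_def by auto
    show "msum 1 (\<lambda>x. ptrace1 dK 1 (G1 (x,y) \<rho>)) UNIV = ?PJ y \<rho>"
      unfolding G1_def using Rc[OF r] T1[OF r] by (simp add: ptrace1_1 ptrace1_1' povm_ins_val[OF Jins r])
  next
    fix \<rho> x assume "state dH \<rho>"
    then have r: "\<rho> \<in> carrier_mat dH dH" unfolding state_def pos_op_def by auto
    show "msum dK (\<lambda>y. ptrace2 dK 1 (G1 (x,y) \<rho>)) UNIV = I x \<rho>"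
      unfolding G1_def using Rc[OF r] RI[OF r] by (simp add: ptrace2_1 ptrace2_1')
  qed
  define G2 :: "unit \<times> 'y \<Rightarrow> complex mat \<Rightarrow> complex mat"
    where "G2 = (\<lambda>(u::unit,y) X. msum dK (\<lambda>x. G1 (x,y) X) UNIV)"
  have c2: "compatible dH dK 1 (chan_ins (induced_channel dK I)) ?PJ"
    unfolding compatible_def
  proof (intro exI conjI allI impI)
    show "instrument dH (dK*1) G2" using inst_marg[OF inst1] unfolding G2_def by simp
    fix \<rho> y assume "state dH \<rho>"
    then have r: "\<rho> \<in> carrier_mat dH dH" unfolding state_def pos_op_def by auto
    have "msum 1 (\<lambda>u. ptrace1 dK 1 (G2 (u,y) \<rho>)) UNIV = msum 1 (\<lambda>u::unit. trm (msum dK (\<lambda>x. R y x (J y \<rho>)) UNIV)) UNIV"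
      unfolding G2_def G1_def by (simp add: ptrace1_1 ptrace1_1')
    also have "\<dots> = trm (msum dK (\<lambda>x. R y x (J y \<rho>)) UNIV)"
      unfolding msum_def trm_def by (intro eq_matI) (auto simp: UNIV_unit)
    also have "\<dots> = msum 1 (\<lambda>x. trm (R y x (J y \<rho>))) UNIV"
      using Rc[OF r] by (intro msum_trm[symmetric]) auto
    also have "\<dots> = ?PJ y \<rho>" using T1[OF r] povm_ins_val[OF Jins r] by simp
    finally show "msum 1 (\<lambda>u. ptrace1 dK 1 (G2 (u,y) \<rho>)) UNIV = ?PJ y \<rho>" .
  next
    fix \<rho> u assume "state dH \<rho>"
    then have r: "\<rho> \<in> carrier_mat dH dH" unfolding state_def pos_op_def by auto
    have "msum dK (\<lambda>y. ptrace2 dK 1 (G2 (u,y) \<rho>)) UNIV = msum dK (\<lambda>y. msum dK (\<lambda>x. R y x (J y \<rho>)) UNIV) UNIV"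
      unfolding G2_def G1_def by (simp add: ptrace2_1 ptrace2_1')
    also have "\<dots> = msum dK (\<lambda>x. msum dK (\<lambda>y. R y x (J y \<rho>)) UNIV) UNIV" by (rule msum_swap)
    also have "\<dots> = msum dK (\<lambda>x. I x \<rho>) UNIV" using RI[OF r] by simp
    finally show "msum dK (\<lambda>y. ptrace2 dK 1 (G2 (u,y) \<rho>)) UNIV = chan_ins (induced_channel dK I) u \<rho>"
      unfolding chan_ins_def induced_channel_def .
  qed
  define G3 :: "'x \<times> 'y \<Rightarrow> complex mat \<Rightarrow> complex mat" where "G3 = (\<lambda>z X. trm (G1 z X))"
  have c3: "compatible dH 1 1 (povm_ins (induced_povm dH I)) ?PJ"
    unfolding compatible_def
  proof (intro exI conjI allI impI)
    show "instrument dH (1*1) G3" using inst_tr[OF inst1] unfolding G3_def by simp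
    fix \<rho> y assume "state dH \<rho>"
    then have r: "\<rho> \<in> carrier_mat dH dH" unfolding state_def pos_op_def by auto
    show "msum 1 (\<lambda>x. ptrace1 1 1 (G3 (x,y) \<rho>)) UNIV = ?PJ y \<rho>"
      unfolding G3_def G1_def using T1[OF r] by (simp add: ptrace1_1 ptrace1_1' povm_ins_val[OF Jins r])
  next
    fix \<rho> x assume "state dH \<rho>"
    then have r: "\<rho> \<in> carrier_mat dH dH" unfolding state_def pos_op_def by auto
    have "msum 1 (\<lambda>y. ptrace2 1 1 (G3 (x,y) \<rho>)) UNIV = msum 1 (\<lambda>y. trm (R y x (J y \<rho>))) UNIV"
      unfolding G3_def G1_def by (simp add: ptrace2_1 ptrace2_1')
    also have "\<dots> = trm (msum dK (\<lambda>y. R y x (J y \<rho>)) UNIV)"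
      using Rc[OF r] by (intro msum_trm) auto
    also have "\<dots> = povm_ins (induced_povm dH I) x \<rho>"
      using RI[OF r] povm_ins_val[OF Iins r] by simp
    finally show "msum 1 (\<lambda>y. ptrace2 1 1 (G3 (x,y) \<rho>)) UNIV = povm_ins (induced_povm dH I) x \<rho>" .
  qed
  show ?thesis using c1 c2 c3 by blast
qed

end
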